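(* Assume $\clubsuit$. Then: (1) For every family $\{A_\alpha:\alpha<\omega_2\}$ of unbounded subsets of $\omega_1$ and every ordinal $\tau<\omega\cdot\omega$ there is $B\subseteq\omega_2$, $|B|=\aleph_2$, such that $\mathrm{otp}(\bigcap_{\alpha\in B}A_\alpha)\geq\tau$. (2) For every $\tau<\omega\cdot\omega$, $\binom{\omega_2}{\omega_1}\rightarrow\binom{\omega_2}{\tau}^{1,1}_{\aleph_0}$ holds.
   Context: $\clubsuit$ (tiltan) at $\aleph_1$: there is a sequence $\langle T_\alpha:\alpha\in\lim(\omega_1)\rangle$ such that each $T_\alpha$ is a cofinal subset of $\alpha$, and for every unbounded $A\subseteq\omega_1$ the set $\{\alpha: T_\alpha\subseteq A\}$ is stationary. The polarized relation $\binom{\alpha}{\beta}\rightarrow\binom{\gamma}{\delta}^{1,1}_\theta$ means: for every $c:\alpha\times\beta\to\theta$ there are $A\subseteq\alpha$ of order type $\gamma$ and $B\subseteq\beta$ of order type $\delta$ such that $c\restriction(A\times B)$ is constant. *)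

theory Defs
  imports Main
begin

text \<open>omega_1 and omega_2 as initial well-orders (Cantor-style cardinal successors of natLeq = omega).\<close>
definition w1 :: "nat set rel" where "w1 = cardSuc natLeq"
definition w2 :: "nat set set rel" where "w2 = cardSuc w1"

definition omega_sq :: "(nat \<times> nat) rel" where
  "omega_sq = {((a,b),(c,d)). a < c \<or> (a = c \<and> b \<le> d)}"

definition unbounded1 :: "nat set set \<Rightarrow> bool" where
  "unbounded1 A \<longleftrightarrow> A \<subseteq> Field w1 \<and> (\<forall>x\<in>Field w1. \<exists>y\<in>A. (x,y) \<in> w1 \<and> y \<noteq> x)"

definition limit1 :: "nat set \<Rightarrow> bool" where
  "limit1 a \<longleftrightarrow> a \<in> Field w1 \<and> underS w1 a \<noteq> {} \<and>
     (\<forall>b\<in>underS w1 a. \<exists>c\<in>underS w1 a. b \<in> underS w1 c)"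

definition closed1 :: "nat set set \<Rightarrow> bool" where
  "closed1 C \<longleftrightarrow> C \<subseteq> Field w1 \<and>
     (\<forall>a. limit1 a \<longrightarrow> (\<forall>b\<in>underS w1 a. \<exists>c\<in>C \<inter> underS w1 a. b \<in> underS w1 c) \<longrightarrow> a \<in> C)"

definition club1 :: "nat set set \<Rightarrow> bool" where
  "club1 C \<longleftrightarrow> closed1 C \<and> unbounded1 C"

definition stationary1 :: "nat set set \<Rightarrow> bool" where
  "stationary1 S \<longleftrightarrow> S \<subseteq> Field w1 \<and> (\<forall>C. club1 C \<longrightarrow> S \<inter> C \<noteq> {})"

definition clubsuit :: bool where
  "clubsuit \<longleftrightarrow> (\<exists>T :: nat set \<Rightarrow> nat set set.
     (\<forall>a. limit1 a \<longrightarrow> T a \<subseteq> underS w1 a \<and> (\<forall>b\<in>underS w1 a. \<exists>c\<in>T a. (b,c) \<in> w1)) \<and>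
     (\<forall>A. unbounded1 A \<longrightarrow> stationary1 {a. limit1 a \<and> T a \<subseteq> A}))"

end

theory Submission
  imports Defs
begin

context includes cardinal_syntax begin

lemma w1C: "Card_order w1" unfolding w1_def by (simp add: cardSuc_Card_order natLeq_Card_order)
lemma w2C: "Card_order w2" unfolding w2_def by (simp add: cardSuc_Card_order w1C)
lemma w1W: "Well_order w1" using w1C card_order_on_well_order_on by blast
lemma w2W: "Well_order w2" using w2C card_order_on_well_order_on by blast
lemma w1inf: "infinite (Field w1)"
  using Cinfinite_cardSuc[OF natLeq_Cinfinite] unfolding w1_def cinfinite_def by simp
lemma w2inf: "infinite (Field w2)"
  using Cinfinite_cardSuc[of w1] w1inf w1C unfolding w2_def cinfinite_def by simp
lemma w1_lt_w2: "w1 <o w2" unfolding w2_def by (simp add: cardSuc_greater w1C)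

lemma ctbl_iff: "( |S| <o w1) = ( |S| \<le>o natLeq)" for S :: "nat set set"
  unfolding w1_def by (rule cardSuc_ordLeq_ordLess[OF natLeq_Card_order card_of_Card_order])
lemma w2_iff: "( |S| <o w2) = ( |S| \<le>o w1)" for S :: "nat set set set"
  unfolding w2_def by (rule cardSuc_ordLeq_ordLess[OF w1C card_of_Card_order])

lemma w1_trans: "trans w1" and w1_antisym: "antisym w1" and w1_total: "total_on (Field w1) w1"
  and w1_refl: "refl_on (Field w1) w1"
  using w1W unfolding well_order_on_def linear_order_on_def partial_order_on_def preorder_on_def by auto

lemma lt_trans: "x \<in> underS w1 y \<Longrightarrow> y \<in> underS w1 z \<Longrightarrow> x \<in> underS w1 z"
  using w1_trans w1_antisym unfolding underS_def trans_def antisym_def by blast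

lemma le_lt_trans: "(x,y) \<in> w1 \<Longrightarrow> y \<in> underS w1 z \<Longrightarrow> x \<in> underS w1 z"
  using w1_trans w1_antisym unfolding underS_def trans_def antisym_def by blast

lemma lt_cases: "x \<in> Field w1 \<Longrightarrow> y \<in> Field w1 \<Longrightarrow> x \<in> underS w1 y \<or> x = y \<or> y \<in> underS w1 x"
  using w1_total unfolding total_on_def underS_def by blast

lemma bounded_ctbl: assumes "S \<subseteq> under w1 b" shows "|S| \<le>o natLeq"
proof (cases "b \<in> Field w1")
  case True
  have u: "|underS w1 b| \<le>o natLeq" using card_of_underS[OF w1C True] ctbl_iff by blast
  have v: "|{b}| \<le>o natLeq" using finite_iff_ordLess_natLeq[of "{b}"] ordLess_imp_ordLeq by auto
  have 1: "|underS w1 b \<union> {b}| \<le>o natLeq"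
    by (rule card_of_Un_ordLeq_infinite_Field[OF _ u v natLeq_Card_order]) (simp add: Field_natLeq)
  have "S \<subseteq> underS w1 b \<union> {b}" using assms by (auto simp: under_def underS_def)
  from ordLeq_transitive[OF card_of_mono1[OF this] 1] show ?thesis .
next
  case False
  hence "S = {}" using assms by (auto simp: under_def Field_def)
  thus ?thesis using card_of_empty1[of natLeq] natLeq_Well_order by simp
qed

lemma no_max: "x \<in> Field w1 \<Longrightarrow> \<exists>y\<in>Field w1. x \<in> underS w1 y"
proof (rule ccontr)
  assume x: "x \<in> Field w1" and nm: "\<not> (\<exists>y\<in>Field w1. x \<in> underS w1 y)"
  have "Field w1 \<subseteq> under w1 x"
  proof
    fix y assume y: "y \<in> Field w1"
    show "y \<in> under w1 x" using lt_cases[OF x y] nm y w1_refl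
      by (auto simp: under_def underS_def refl_on_def)
  qed
  hence "|Field w1| \<le>o natLeq" using bounded_ctbl by blast
  moreover have "natLeq <o |Field w1|"
    using card_of_Field_ordIso[OF w1C] ordLess_ordIso_trans ordIso_symmetric
    unfolding w1_def by (metis cardSuc_greater natLeq_Card_order w1C w1_def)
  ultimately show False using not_ordLess_ordLeq by blast
qed

end

context includes cardinal_syntax begin

lemma wo_facts: assumes "Well_order r"
  shows "refl_on (Field r) r" "trans r" "antisym r" "total_on (Field r) r" "wf (r - Id)"
  using assms unfolding well_order_on_def linear_order_on_def partial_order_on_def preorder_on_def by auto

lemma mono_ordLeq:
  assumes r: "Well_order r" and r': "Well_order r'" and inj: "inj_on h (Field r)"
  and sub: "h ` Field r \<subseteq> Field r'" and cmp: "\<And>x y. (x,y) \<in> r \<Longrightarrow> (h x, h y) \<in> r'"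
  shows "r \<le>o r'"
proof (rule ccontr)
  note rf = wo_facts[OF r]
  assume "\<not> r \<le>o r'"
  hence "r' <o r" using not_ordLeq_iff_ordLess r r' by blast
  then obtain a where a: "a \<in> Field r" and "r' =o Restr r (underS r a)"
    using ordLess_iff_ordIso_Restr[OF r r'] by blast
  then obtain g where g: "iso r' (Restr r (underS r a)) g" unfolding ordIso_def by blast
  have "g ` Field r' = Field (Restr r (underS r a))" by (rule iso_Field[OF g])
  also have "\<dots> \<subseteq> underS r a" by (rule Field_Restr_subset)
  finally have gF: "g ` Field r' \<subseteq> underS r a" .
  have ginj: "inj_on g (Field r')" using g unfolding iso_def bij_betw_def by simp
  have "embed r' (Restr r (underS r a)) g" using g unfolding iso_def by simp
  hence gc0: "compat r' (Restr r (underS r a)) g" by (rule embed_compat)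
  have gc: "(g x, g y) \<in> r" if "(x,y) \<in> r'" for x y
    using gc0 that unfolding compat_def by blast
  define \<phi> where "\<phi> = g \<circ> h"
  have uF: "underS r a \<subseteq> Field r" unfolding underS_def Field_def by blast
  have \<phi>F: "\<phi> x \<in> underS r a" if "x \<in> Field r" for x using that sub gF unfolding \<phi>_def by auto
  have \<phi>inj: "inj_on \<phi> (Field r)" unfolding \<phi>_def using comp_inj_on[OF inj] ginj sub
    by (meson inj_on_subset)
  have \<phi>c: "(\<phi> x, \<phi> y) \<in> r" if "(x,y) \<in> r" for x y using gc cmp that unfolding \<phi>_def by simp
  have key: "x \<in> Field r \<longrightarrow> (x, \<phi> x) \<in> r" for x
  proof (induct x rule: wf_induct[OF rf(5)])
    case (1 x)
    show ?case
    proof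
      assume x: "x \<in> Field r"
      show "(x, \<phi> x) \<in> r"
      proof (rule ccontr)
        assume nx: "(x, \<phi> x) \<notin> r"
        have px: "\<phi> x \<in> Field r" using \<phi>F[OF x] uF by blast
        have ne: "\<phi> x \<noteq> x"
        proof
          assume "\<phi> x = x" with nx x rf(1) show False unfolding refl_on_def by auto
        qed
        hence "(\<phi> x, x) \<in> r" using rf(4) x px nx unfolding total_on_def by blast
        with ne have "(\<phi> x, x) \<in> r - Id" by blast
        with 1 px have a1: "(\<phi> x, \<phi> (\<phi> x)) \<in> r" by blast
        have a2: "(\<phi> (\<phi> x), \<phi> x) \<in> r" using \<phi>c \<open>(\<phi> x, x) \<in> r\<close> by blast
        have "\<phi> (\<phi> x) = \<phi> x" using rf(3) a1 a2 unfolding antisym_def by blast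
        hence "\<phi> x = x" using \<phi>inj px x unfolding inj_on_def by blast
        with ne show False by blast
      qed
    qed
  qed
  have "(a, \<phi> a) \<in> r" using key a by blast
  moreover have "(\<phi> a, a) \<in> r" "\<phi> a \<noteq> a" using \<phi>F[OF a] unfolding underS_def by auto
  ultimately show False using rf(3) unfolding antisym_def by blast
qed

lemma osq_Field: "Field omega_sq = UNIV"
  unfolding omega_sq_def Field_def by auto

lemma osq_WO: "Well_order omega_sq"
proof -
  have w: "wf (omega_sq - Id)"
  proof (rule wf_subset[OF wf_lex_prod[OF wf_less_than wf_less_than]])
    show "omega_sq - Id \<subseteq> less_than <*lex*> less_than" unfolding omega_sq_def by auto
  qed
  have "refl_on UNIV omega_sq" unfolding omega_sq_def refl_on_def by auto
  moreover have "trans omega_sq" unfolding omega_sq_def trans_def by auto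
  moreover have "antisym omega_sq" unfolding omega_sq_def antisym_def by auto
  moreover have "total_on UNIV omega_sq" unfolding omega_sq_def total_on_def by auto
  ultimately show ?thesis unfolding well_order_on_def linear_order_on_def partial_order_on_def preorder_on_def osq_Field
    using w by simp
qed

end

context includes cardinal_syntax begin

lemma lt_le_trans: "x \<in> underS w1 y \<Longrightarrow> (y,z) \<in> w1 \<Longrightarrow> x \<in> underS w1 z"
  using w1_trans w1_antisym unfolding underS_def trans_def antisym_def by blast

lemma pigeon:
  fixes f :: "nat set set \<Rightarrow> 'b"
  assumes B0: "|B0| =o w2" and fI: "|f ` B0| \<le>o w1"
  shows "\<exists>\<alpha>0\<in>B0. |{\<alpha>\<in>B0. f \<alpha> = f \<alpha>0}| =o w2"
proof (rule ccontr)
  assume nc: "\<not> ?thesis"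
  have "\<forall>k\<in>f`B0. |{\<alpha>\<in>B0. f \<alpha> = k}| \<le>o w1"
  proof
    fix k assume "k \<in> f`B0" then obtain \<alpha>0 where a0: "\<alpha>0\<in>B0" "k = f \<alpha>0" by blast
    have le: "|{\<alpha>\<in>B0. f \<alpha> = k}| \<le>o w2"
      using ordLeq_ordIso_trans[OF card_of_mono1[of "{\<alpha>\<in>B0. f \<alpha> = k}" B0] B0] by blast
    have "\<not> |{\<alpha>\<in>B0. f \<alpha> = k}| =o w2" using nc a0 by blast
    hence "|{\<alpha>\<in>B0. f \<alpha> = k}| <o w2" using le ordLeq_iff_ordLess_or_ordIso by blast
    thus "|{\<alpha>\<in>B0. f \<alpha> = k}| \<le>o w1" using w2_iff by blast
  qed
  from card_of_UNION_ordLeq_infinite_Field[OF w1inf w1C fI this]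
  have "|\<Union>k\<in>f`B0. {\<alpha>\<in>B0. f \<alpha> = k}| \<le>o w1" .
  moreover have "(\<Union>k\<in>f`B0. {\<alpha>\<in>B0. f \<alpha> = k}) = B0" by blast
  ultimately have "|B0| \<le>o w1" by simp
  hence "|B0| <o w2" using w2_iff by blast
  moreover have "w2 \<le>o |B0|" using B0 ordIso_iff_ordLeq by blast
  ultimately show False using not_ordLess_ordLeq by blast
qed

lemma exists_delta:
  assumes T2: "\<forall>A. unbounded1 A \<longrightarrow> stationary1 {a. limit1 a \<and> T a \<subseteq> A}"
  and X: "unbounded1 X" and \<beta>: "\<beta> \<in> Field w1"
  shows "\<exists>\<delta>. limit1 \<delta> \<and> T \<delta> \<subseteq> X \<and> \<beta> \<in> underS w1 \<delta>"
proof -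
  let ?C = "{x \<in> Field w1. \<beta> \<in> underS w1 x}"
  have cl: "closed1 ?C" unfolding closed1_def
  proof (intro conjI allI impI)
    show "?C \<subseteq> Field w1" by blast
    fix a assume la: "limit1 a" and cof: "\<forall>b\<in>underS w1 a. \<exists>c\<in>?C \<inter> underS w1 a. b \<in> underS w1 c"
    from la obtain b where "b \<in> underS w1 a" unfolding limit1_def by blast
    with cof obtain c where "c \<in> ?C" "c \<in> underS w1 a" by blast
    hence "\<beta> \<in> underS w1 a" using lt_trans by blast
    moreover have "a \<in> Field w1" using la limit1_def by blast
    ultimately show "a \<in> ?C" by blast
  qed
  have ub: "unbounded1 ?C" unfolding unbounded1_def
  proof (intro conjI ballI)
    show "?C \<subseteq> Field w1" by blast
    fix x assume x: "x \<in> Field w1"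
    have "\<exists>m\<in>Field w1. (x,m) \<in> w1 \<and> (\<beta>,m) \<in> w1"
      using lt_cases[OF x \<beta>] w1_refl x \<beta> unfolding underS_def refl_on_def by blast
    then obtain m where m: "m \<in> Field w1" "(x,m) \<in> w1" "(\<beta>,m) \<in> w1" by blast
    then obtain y where y: "y \<in> Field w1" "m \<in> underS w1 y" using no_max by blast
    then have "x \<in> underS w1 y" "\<beta> \<in> underS w1 y" using le_lt_trans m by blast+
    thus "\<exists>y\<in>?C. (x,y) \<in> w1 \<and> y \<noteq> x" using y unfolding underS_def by blast
  qed
  have "club1 ?C" using cl ub club1_def by blast
  moreover have "stationary1 {a. limit1 a \<and> T a \<subseteq> X}" using T2 X by blast
  ultimately have "{a. limit1 a \<and> T a \<subseteq> X} \<inter> ?C \<noteq> {}" unfolding stationary1_def by blast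
  thus ?thesis by blast
qed

lemma cof_next:
  assumes T1: "\<forall>a. limit1 a \<longrightarrow> T a \<subseteq> underS w1 a \<and> (\<forall>b\<in>underS w1 a. \<exists>c\<in>T a. (b,c) \<in> w1)"
  and la: "limit1 \<delta>" and b: "b \<in> underS w1 \<delta>"
  shows "\<exists>c\<in>T \<delta>. b \<in> underS w1 c"
proof -
  obtain c' where c': "c' \<in> underS w1 \<delta>" "b \<in> underS w1 c'" using la b unfolding limit1_def by blast
  then obtain c where "c \<in> T \<delta>" "(c',c) \<in> w1" using T1 la by blast
  thus ?thesis using lt_le_trans c' by blast
qed

lemma seq:
  assumes T1: "\<forall>a. limit1 a \<longrightarrow> T a \<subseteq> underS w1 a \<and> (\<forall>b\<in>underS w1 a. \<exists>c\<in>T a. (b,c) \<in> w1)"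
  and la: "limit1 \<delta>" and \<beta>: "\<beta> \<in> underS w1 \<delta>"
  shows "\<exists>g::nat \<Rightarrow> nat set. (\<forall>k. g k \<in> T \<delta>) \<and> \<beta> \<in> underS w1 (g 0) \<and> (\<forall>k k'. k < k' \<longrightarrow> g k \<in> underS w1 (g k'))"
proof -
  have "\<forall>b\<in>underS w1 \<delta>. \<exists>c. c \<in> T \<delta> \<and> b \<in> underS w1 c" using cof_next[OF T1 la] by blast
  from bchoice[OF this]
  obtain nx where nx: "\<forall>b\<in>underS w1 \<delta>. nx b \<in> T \<delta> \<and> b \<in> underS w1 (nx b)" by blast
  define g where "g k = (nx ^^ Suc k) \<beta>" for k
  have TU: "T \<delta> \<subseteq> underS w1 \<delta>" using T1 la by blast
  have gS: "g (Suc k) = nx (g k)" for k unfolding g_def by simp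
  have gT: "g k \<in> T \<delta>" for k
  proof (induct k)
    case 0 thus ?case using nx \<beta> unfolding g_def by simp
  next
    case (Suc k)
    hence "g k \<in> underS w1 \<delta>" using TU by blast
    hence "nx (g k) \<in> T \<delta>" using nx by blast
    thus ?case unfolding gS .
  qed
  have step: "g k \<in> underS w1 (g (Suc k))" for k
  proof -
    have "g k \<in> underS w1 \<delta>" using gT[of k] TU by blast
    hence "g k \<in> underS w1 (nx (g k))" using nx by blast
    thus ?thesis unfolding gS .
  qed
  have inc: "k < k' \<Longrightarrow> g k \<in> underS w1 (g k')" for k k'
  proof (induct k')
    case 0 thus ?case by simp
  next
    case (Suc k')
    show ?case
    proof (cases "k = k'")
      case True thus ?thesis using step by simp
    next
      case False hence "k < k'" using Suc.prems by simp
      thus ?thesis using Suc.hyps step[of k'] lt_trans by blast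
    qed
  qed
  have "\<beta> \<in> underS w1 (g 0)" using nx \<beta> unfolding g_def by simp
  hence "(\<forall>k. g k \<in> T \<delta>) \<and> \<beta> \<in> underS w1 (g 0) \<and> (\<forall>k k'. k < k' \<longrightarrow> g k \<in> underS w1 (g k'))"
    using gT inc by blast
  thus ?thesis by (rule exI[where x=g])
qed

end

context includes cardinal_syntax begin

lemma claim:
  assumes T1: "\<forall>a. limit1 a \<longrightarrow> T a \<subseteq> underS w1 a \<and> (\<forall>b\<in>underS w1 a. \<exists>c\<in>T a. (b,c) \<in> w1)"
  and T2: "\<forall>A. unbounded1 A \<longrightarrow> stationary1 {a. limit1 a \<and> T a \<subseteq> A}"
  and UA: "\<forall>\<alpha>\<in>Field w2. unbounded1 (A \<alpha>)"
  shows "\<forall>B0 \<beta>. B0 \<subseteq> Field w2 \<longrightarrow> |B0| =o w2 \<longrightarrow> \<beta> \<in> Field w1 \<longrightarrow>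
     (\<exists>B (h::nat\<times>nat \<Rightarrow> nat set). B \<subseteq> B0 \<and> |B| =o w2 \<and>
        (\<forall>p. fst p < N \<longrightarrow> (\<forall>\<alpha>\<in>B. h p \<in> A \<alpha>) \<and> \<beta> \<in> underS w1 (h p)) \<and>
        (\<forall>p q. fst p < N \<longrightarrow> fst q < N \<longrightarrow> (p,q) \<in> omega_sq \<longrightarrow> p \<noteq> q \<longrightarrow> h p \<in> underS w1 (h q)))"
proof (induct N)
  case 0
  show ?case
  proof (intro allI impI)
    fix B0 \<beta> assume "B0 \<subseteq> Field w2" "|B0| =o w2" "\<beta> \<in> Field w1"
    thus "\<exists>B (h::nat\<times>nat \<Rightarrow> nat set). B \<subseteq> B0 \<and> |B| =o w2 \<and>
        (\<forall>p. fst p < 0 \<longrightarrow> (\<forall>\<alpha>\<in>B. h p \<in> A \<alpha>) \<and> \<beta> \<in> underS w1 (h p)) \<and>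
        (\<forall>p q. fst p < 0 \<longrightarrow> fst q < 0 \<longrightarrow> (p,q) \<in> omega_sq \<longrightarrow> p \<noteq> q \<longrightarrow> h p \<in> underS w1 (h q))"
      by (intro exI[of _ B0] exI[of _ "\<lambda>p. \<beta>"]) simp
  qed
next
  case (Suc N)
  show ?case
  proof (intro allI impI)
    fix B0 \<beta> assume B0: "B0 \<subseteq> Field w2" and cB0: "|B0| =o w2" and \<beta>: "\<beta> \<in> Field w1"
    have "\<forall>\<alpha>\<in>B0. \<exists>\<delta>. limit1 \<delta> \<and> T \<delta> \<subseteq> A \<alpha> \<and> \<beta> \<in> underS w1 \<delta>"
      using exists_delta[OF T2 _ \<beta>] UA B0 by blast
    from bchoice[OF this] obtain df where
      df: "\<forall>\<alpha>\<in>B0. limit1 (df \<alpha>) \<and> T (df \<alpha>) \<subseteq> A \<alpha> \<and> \<beta> \<in> underS w1 (df \<alpha>)" by blast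
    have "df ` B0 \<subseteq> Field w1" using df unfolding limit1_def by blast
    hence "|df ` B0| \<le>o w1"
      using ordLeq_ordIso_trans[OF card_of_mono1 card_of_Field_ordIso[OF w1C]] by blast
    from pigeon[OF cB0 this] obtain \<alpha>0 where \<alpha>0: "\<alpha>0 \<in> B0"
      and cB1: "|{\<alpha>\<in>B0. df \<alpha> = df \<alpha>0}| =o w2" by blast
    define d where "d = df \<alpha>0"
    define B1 where "B1 = {\<alpha>\<in>B0. df \<alpha> = d}"
    have cB1': "|B1| =o w2" using cB1 unfolding B1_def d_def .
    have dl: "limit1 d" and d\<beta>: "\<beta> \<in> underS w1 d" using df \<alpha>0 unfolding d_def by auto
    have dF: "d \<in> Field w1" using dl unfolding limit1_def by blast
    have TA: "T d \<subseteq> A \<alpha>" if "\<alpha> \<in> B1" for \<alpha> using df that unfolding B1_def by auto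
    have B1sub: "B1 \<subseteq> Field w2" using B0 unfolding B1_def by blast
    from Suc[rule_format, OF B1sub cB1' dF] obtain B and h :: "nat\<times>nat \<Rightarrow> nat set" where
      hB: "B \<subseteq> B1" and cB: "|B| =o w2"
      and h1: "\<forall>p. fst p < N \<longrightarrow> (\<forall>\<alpha>\<in>B. h p \<in> A \<alpha>) \<and> d \<in> underS w1 (h p)"
      and h2: "\<forall>p q. fst p < N \<longrightarrow> fst q < N \<longrightarrow> (p,q) \<in> omega_sq \<longrightarrow> p \<noteq> q \<longrightarrow> h p \<in> underS w1 (h q)"
      by blast
    from seq[OF T1 dl d\<beta>] obtain g :: "nat \<Rightarrow> nat set" where gT: "\<forall>k. g k \<in> T d" and g0: "\<beta> \<in> underS w1 (g 0)"
      and ginc: "\<forall>k k'. k < k' \<longrightarrow> g k \<in> underS w1 (g k')" by blast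
    have TU: "T d \<subseteq> underS w1 d" using T1 dl by blast
    define h' where "h' p = (if fst p = 0 then g (snd p) else h (fst p - 1, snd p))" for p
    have gb: "\<beta> \<in> underS w1 (g k)" for k
    proof (cases k)
      case 0 thus ?thesis using g0 by simp
    next
      case (Suc k1) thus ?thesis using g0 ginc lt_trans by blast
    qed
    have P3: "\<forall>p. fst p < Suc N \<longrightarrow> (\<forall>\<alpha>\<in>B. h' p \<in> A \<alpha>) \<and> \<beta> \<in> underS w1 (h' p)"
    proof (intro allI impI)
      fix p :: "nat \<times> nat" assume p: "fst p < Suc N"
      obtain a b where ab: "p = (a,b)" by (cases p)
      show "(\<forall>\<alpha>\<in>B. h' p \<in> A \<alpha>) \<and> \<beta> \<in> underS w1 (h' p)"
      proof (cases a)
        case 0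
        have "h' p = g b" unfolding h'_def ab 0 by simp
        moreover have "\<forall>\<alpha>\<in>B. g b \<in> A \<alpha>" using gT TA hB by blast
        ultimately show ?thesis using gb by simp
      next
        case (Suc a1)
        have hp: "h' p = h (a1, b)" unfolding h'_def ab Suc by simp
        have "a1 < N" using p ab Suc by simp
        hence "(\<forall>\<alpha>\<in>B. h (a1,b) \<in> A \<alpha>) \<and> d \<in> underS w1 (h (a1,b))" using h1 by auto
        thus ?thesis using hp d\<beta> lt_trans by auto
      qed
    qed
    have P4: "\<forall>p q. fst p < Suc N \<longrightarrow> fst q < Suc N \<longrightarrow> (p,q) \<in> omega_sq \<longrightarrow> p \<noteq> q \<longrightarrow> h' p \<in> underS w1 (h' q)"
    proof (intro allI impI)
      fix p q :: "nat \<times> nat"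
      assume p: "fst p < Suc N" and q: "fst q < Suc N" and pq: "(p,q) \<in> omega_sq" and ne: "p \<noteq> q"
      obtain a b where ab: "p = (a,b)" by (cases p)
      obtain c e where ce: "q = (c,e)" by (cases q)
      have lex: "a < c \<or> (a = c \<and> b \<le> e)" using pq unfolding ab ce omega_sq_def by simp
      show "h' p \<in> underS w1 (h' q)"
      proof (cases a)
        case a0: 0
        have hp: "h' p = g b" unfolding h'_def ab a0 by simp
        show ?thesis
        proof (cases c)
          case 0
          hence "b < e" using lex ne ab ce a0 by auto
          thus ?thesis using hp ginc unfolding h'_def ce 0 by simp
        next
          case (Suc c1)
          have hq: "h' q = h (c1, e)" unfolding h'_def ce Suc by simp
          have "c1 < N" using q ce Suc by simp
          hence "d \<in> underS w1 (h (c1,e))" using h1 by auto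
          moreover have "g b \<in> underS w1 d" using gT TU by blast
          ultimately show ?thesis using hp hq lt_trans by simp
        qed
      next
        case (Suc a1)
        then obtain c1 where c1: "c = Suc c1" using lex by (cases c) auto
        have hp: "h' p = h (a1, b)" unfolding h'_def ab Suc by simp
        have hq: "h' q = h (c1, e)" unfolding h'_def ce c1 by simp
        have "((a1,b),(c1,e)) \<in> omega_sq" using lex Suc c1 unfolding omega_sq_def by auto
        moreover have "(a1,b) \<noteq> (c1,e)" using ne ab ce Suc c1 by auto
        moreover have "a1 < N" "c1 < N" using p q ab ce Suc c1 by auto
        ultimately show ?thesis using h2 hp hq by auto
      qed
    qed
    have "B \<subseteq> B0" using hB unfolding B1_def by blast
    with cB P3 P4 show "\<exists>B (h::nat\<times>nat \<Rightarrow> nat set). B \<subseteq> B0 \<and> |B| =o w2 \<and>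
        (\<forall>p. fst p < Suc N \<longrightarrow> (\<forall>\<alpha>\<in>B. h p \<in> A \<alpha>) \<and> \<beta> \<in> underS w1 (h p)) \<and>
        (\<forall>p q. fst p < Suc N \<longrightarrow> fst q < Suc N \<longrightarrow> (p,q) \<in> omega_sq \<longrightarrow> p \<noteq> q \<longrightarrow> h p \<in> underS w1 (h q))"
      by (intro exI[of _ B] exI[of _ h']) simp
  qed
qed

end

context includes cardinal_syntax begin

lemma core:
  fixes \<tau> :: "'c rel"
  assumes T1: "\<forall>a. limit1 a \<longrightarrow> T a \<subseteq> underS w1 a \<and> (\<forall>b\<in>underS w1 a. \<exists>c\<in>T a. (b,c) \<in> w1)"
  and T2: "\<forall>A. unbounded1 A \<longrightarrow> stationary1 {a. limit1 a \<and> T a \<subseteq> A}"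
  and UA: "\<forall>\<alpha>\<in>Field w2. unbounded1 (A \<alpha>)"
  and tw: "Well_order \<tau>" and tl: "\<tau> <o omega_sq"
  and B0: "B0 \<subseteq> Field w2" and cB0: "|B0| =o w2"
  shows "\<exists>B. B \<subseteq> B0 \<and> |B| =o w2 \<and> \<tau> \<le>o Restr w1 (\<Inter>\<alpha>\<in>B. A \<alpha>)"
proof -
  obtain pnt where "pnt \<in> Field omega_sq" and iso: "\<tau> =o Restr omega_sq (underS omega_sq pnt)"
    using ordLess_iff_ordIso_Restr[OF osq_WO tw] tl by blast
  obtain m k where mk: "pnt = (m,k)" by (cases pnt)
  obtain \<beta> where \<beta>: "\<beta> \<in> Field w1" using w1inf by (metis finite.emptyI ex_in_conv)
  from claim[OF T1 T2 UA, of "Suc m", rule_format, OF B0 cB0 \<beta>]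
  obtain B and h :: "nat\<times>nat \<Rightarrow> nat set" where hB: "B \<subseteq> B0" and cB: "|B| =o w2"
      and h1: "\<forall>p. fst p < Suc m \<longrightarrow> (\<forall>\<alpha>\<in>B. h p \<in> A \<alpha>) \<and> \<beta> \<in> underS w1 (h p)"
      and h2: "\<forall>p q. fst p < Suc m \<longrightarrow> fst q < Suc m \<longrightarrow> (p,q) \<in> omega_sq \<longrightarrow> p \<noteq> q \<longrightarrow> h p \<in> underS w1 (h q)"
    by blast
  define I where "I = (\<Inter>\<alpha>\<in>B. A \<alpha>)"
  define U where "U = underS omega_sq pnt"
  have FU: "Field (Restr omega_sq U) \<subseteq> U" by (rule Field_Restr_subset)
  have Um: "fst p < Suc m" if "p \<in> U" for p
    using that unfolding U_def underS_def mk omega_sq_def by auto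
  have hI: "h p \<in> Field (Restr w1 I)" if "p \<in> U" for p
  proof -
    have "h p \<in> I" using h1 Um[OF that] unfolding I_def by blast
    moreover have "h p \<in> Field w1" using h1 Um[OF that] unfolding underS_def Field_def by blast
    ultimately have "(h p, h p) \<in> Restr w1 I" using w1_refl unfolding refl_on_def by blast
    thus ?thesis unfolding Field_def by blast
  qed
  have hIr: "(h p, h p) \<in> Restr w1 I" if "p \<in> U" for p
  proof -
    have "h p \<in> I" using h1 Um[OF that] unfolding I_def by blast
    moreover have "h p \<in> Field w1" using h1 Um[OF that] unfolding underS_def Field_def by blast
    ultimately show "(h p, h p) \<in> Restr w1 I" using w1_refl unfolding refl_on_def by blast
  qed
  have "Restr omega_sq U \<le>o Restr w1 I"
  proof (rule mono_ordLeq[OF Well_order_Restr[OF osq_WO] Well_order_Restr[OF w1W]])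
    show "inj_on h (Field (Restr omega_sq U))"
    proof (rule inj_onI)
      fix p q assume p: "p \<in> Field (Restr omega_sq U)" and q: "q \<in> Field (Restr omega_sq U)" and e: "h p = h q"
      show "p = q"
      proof (rule ccontr)
        assume ne: "p \<noteq> q"
        have "(p,q) \<in> omega_sq \<or> (q,p) \<in> omega_sq" unfolding omega_sq_def by (cases p, cases q) auto
        moreover have "fst p < Suc m" "fst q < Suc m" using Um[of p] Um[of q] p q FU by blast+
        ultimately have "h p \<in> underS w1 (h q) \<or> h q \<in> underS w1 (h p)" using h2 ne by metis
        thus False using e unfolding underS_def by auto
      qed
    qed
    show "h ` Field (Restr omega_sq U) \<subseteq> Field (Restr w1 I)" using hI FU by blast
    fix x y assume xy: "(x,y) \<in> Restr omega_sq U"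
    hence x: "x \<in> U" and y: "y \<in> U" and o: "(x,y) \<in> omega_sq" by auto
    show "(h x, h y) \<in> Restr w1 I"
    proof (cases "x = y")
      case True thus ?thesis using hIr[OF x] by simp
    next
      case False
      hence "h x \<in> underS w1 (h y)" using h2 o Um[OF x] Um[OF y] by blast
      moreover have "h x \<in> I" "h y \<in> I" using hIr[OF x] hIr[OF y] by auto
      ultimately show ?thesis unfolding underS_def by auto
    qed
  qed
  hence "\<tau> \<le>o Restr w1 I" using ordIso_ordLeq_trans iso unfolding U_def by blast
  thus ?thesis using hB cB unfolding I_def by blast
qed

end

context includes cardinal_syntax begin

lemma nat_lt_F: "natLeq <o |Field w1|"
  using card_of_Field_ordIso[OF w1C] ordLess_ordIso_trans ordIso_symmetric
  unfolding w1_def by (metis cardSuc_greater natLeq_Card_order w1C w1_def)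

lemma Restr_Restr: "Restr (Restr r A) B = Restr r (A \<inter> B \<inter> Field r)"
  unfolding Field_def by auto

lemma Restr_Field_Int: "Restr r A = Restr r (A \<inter> Field r)"
  unfolding Field_def by auto

lemma part2:
  fixes \<tau> :: "'d rel" and c :: "nat set set \<Rightarrow> nat set \<Rightarrow> nat"
  assumes T1: "\<forall>a. limit1 a \<longrightarrow> T a \<subseteq> underS w1 a \<and> (\<forall>b\<in>underS w1 a. \<exists>c\<in>T a. (b,c) \<in> w1)"
  and T2: "\<forall>A. unbounded1 A \<longrightarrow> stationary1 {a. limit1 a \<and> T a \<subseteq> A}"
  and tw: "Well_order \<tau>" and tl: "\<tau> <o omega_sq"
  shows "\<exists>X Y. X \<subseteq> Field w2 \<and> Y \<subseteq> Field w1 \<and> Restr w2 X =o w2 \<and> Restr w1 Y =o \<tau> \<and>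
           (\<exists>k. \<forall>x\<in>X. \<forall>y\<in>Y. c x y = k)"
proof -
  define S where "S \<alpha> n = {y \<in> Field w1. c \<alpha> y = n}" for \<alpha> n
  have exn: "\<exists>n. unbounded1 (S \<alpha> n)" for \<alpha>
  proof (rule ccontr)
    assume "\<not> ?thesis"
    hence nu: "\<not> unbounded1 (S \<alpha> n)" for n by blast
    have cn: "|S \<alpha> n| \<le>o natLeq" for n
    proof -
      from nu[of n] obtain x where x: "x \<in> Field w1" and nx: "\<forall>y\<in>S \<alpha> n. \<not>((x,y) \<in> w1 \<and> y \<noteq> x)"
        unfolding unbounded1_def S_def by blast
      have "S \<alpha> n \<subseteq> under w1 x"
      proof
        fix y assume y: "y \<in> S \<alpha> n"
        hence yF: "y \<in> Field w1" unfolding S_def by blast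
        show "y \<in> under w1 x" using lt_cases[OF x yF] nx y w1_refl yF
          unfolding under_def underS_def refl_on_def by blast
      qed
      thus ?thesis by (rule bounded_ctbl)
    qed
    have U: "|UNIV :: nat set| \<le>o natLeq"
      using ordIso_imp_ordLeq[OF card_of_Field_natLeq] unfolding Field_natLeq .
    have "|\<Union>n\<in>UNIV. S \<alpha> n| \<le>o natLeq"
      by (rule card_of_UNION_ordLeq_infinite_Field[OF _ natLeq_Card_order U]) (auto simp: Field_natLeq cn)
    moreover have "(\<Union>n\<in>UNIV. S \<alpha> n) = Field w1" unfolding S_def by blast
    ultimately have "|Field w1| \<le>o natLeq" by simp
    thus False using nat_lt_F not_ordLess_ordLeq by blast
  qed
  hence "\<forall>\<alpha>. \<exists>n. unbounded1 (S \<alpha> n)" by blast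
  from choice[OF this] obtain nf where nf: "\<forall>\<alpha>. unbounded1 (S \<alpha> (nf \<alpha>))" by blast
  have l1: "|nf ` Field w2| \<le>o |UNIV :: nat set|" by (rule card_of_mono1) simp
  have l2: "|UNIV :: nat set| \<le>o natLeq"
    using ordIso_imp_ordLeq[OF card_of_Field_natLeq] unfolding Field_natLeq .
  have l3: "natLeq \<le>o w1" unfolding w1_def by (rule cardSuc_ordLeq[OF natLeq_Card_order])
  have "|nf ` Field w2| \<le>o w1" using ordLeq_transitive[OF ordLeq_transitive[OF l1 l2] l3] .
  from pigeon[OF card_of_Field_ordIso[OF w2C] this] obtain \<alpha>0 where
    \<alpha>0: "\<alpha>0 \<in> Field w2" and cB0: "|{\<alpha>\<in>Field w2. nf \<alpha> = nf \<alpha>0}| =o w2" by blast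
  define B0 where "B0 = {\<alpha>\<in>Field w2. nf \<alpha> = nf \<alpha>0}"
  have B0s: "B0 \<subseteq> Field w2" unfolding B0_def by blast
  have UA: "\<forall>\<alpha>\<in>Field w2. unbounded1 (S \<alpha> (nf \<alpha>))" using nf by blast
  from core[OF T1 T2 UA tw tl B0s cB0[folded B0_def]] obtain B where
    hB: "B \<subseteq> B0" and cB: "|B| =o w2" and tI: "\<tau> \<le>o Restr w1 (\<Inter>\<alpha>\<in>B. S \<alpha> (nf \<alpha>))" by blast
  define I where "I = (\<Inter>\<alpha>\<in>B. S \<alpha> (nf \<alpha>))"
  have "\<exists>Y. Y \<subseteq> I \<and> Y \<subseteq> Field w1 \<and> Restr w1 Y =o \<tau>"
  proof -
    have "\<tau> <o Restr w1 I \<or> \<tau> =o Restr w1 I" using tI ordLeq_iff_ordLess_or_ordIso unfolding I_def by blast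
    thus ?thesis
    proof
      assume "\<tau> =o Restr w1 I"
      hence "Restr w1 I =o \<tau>" by (rule ordIso_symmetric)
      hence iso: "Restr w1 (I \<inter> Field w1) =o \<tau>" by (subst Restr_Field_Int[symmetric])
      show ?thesis by (rule exI[of _ "I \<inter> Field w1"]) (use iso in blast)
    next
      assume "\<tau> <o Restr w1 I"
      then obtain a where "\<tau> =o Restr (Restr w1 I) (underS (Restr w1 I) a)"
        using ordLess_iff_ordIso_Restr[OF Well_order_Restr[OF w1W] tw] by blast
      hence "Restr (Restr w1 I) (underS (Restr w1 I) a) =o \<tau>" by (rule ordIso_symmetric)
      hence iso: "Restr w1 (I \<inter> underS (Restr w1 I) a \<inter> Field w1) =o \<tau>" by (subst Restr_Restr[symmetric])
      show ?thesis by (rule exI[of _ "I \<inter> underS (Restr w1 I) a \<inter> Field w1"]) (use iso in blast)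
    qed
  qed
  then obtain Y where Y: "Y \<subseteq> I" "Y \<subseteq> Field w1" "Restr w1 Y =o \<tau>" by blast
  have Bs: "B \<subseteq> Field w2" using hB B0s by blast
  have RB: "Restr w2 B \<le>o w2"
  proof (rule mono_ordLeq[OF Well_order_Restr[OF w2W] w2W, of id])
    show "inj_on id (Field (Restr w2 B))" by simp
    show "id ` Field (Restr w2 B) \<subseteq> Field w2" unfolding Field_def by auto
    show "(id x, id y) \<in> w2" if "(x,y) \<in> Restr w2 B" for x y using that by simp
  qed
  have FB: "Field (Restr w2 B) = B" using Refl_Field_Restr2[OF wo_facts(1)[OF w2W] Bs] .
  have "well_order_on B (Restr w2 B)" using Well_order_Restr[OF w2W, of B] unfolding FB .
  hence "|B| \<le>o Restr w2 B" by (rule card_of_least)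
  hence "w2 \<le>o Restr w2 B" using ordIso_ordLeq_trans[OF ordIso_symmetric[OF cB]] by blast
  hence X: "Restr w2 B =o w2" using RB ordIso_iff_ordLeq by blast
  have "\<forall>x\<in>B. \<forall>y\<in>Y. c x y = nf \<alpha>0"
  proof (intro ballI)
    fix x y assume x: "x \<in> B" and y: "y \<in> Y"
    hence "y \<in> S x (nf x)" using Y(1) unfolding I_def by blast
    moreover have "nf x = nf \<alpha>0" using x hB unfolding B0_def by blast
    ultimately show "c x y = nf \<alpha>0" unfolding S_def by simp
  qed
  thus ?thesis using Bs Y X by blast
qed

end

theorem mainTheorem5:
  assumes "clubsuit"
  shows "(\<forall>(A :: nat set set \<Rightarrow> nat set set) (\<tau> :: 'c rel).
            (\<forall>\<alpha>\<in>Field w2. unbounded1 (A \<alpha>)) \<longrightarrow>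
            Well_order \<tau> \<longrightarrow> (\<tau>, omega_sq) \<in> ordLess \<longrightarrow>
            (\<exists>B. B \<subseteq> Field w2 \<and> (card_of B, w2) \<in> ordIso \<and>
                 (\<tau>, Restr w1 (\<Inter>\<alpha>\<in>B. A \<alpha>)) \<in> ordLeq))
       \<and> (\<forall>(\<tau> :: 'd rel) (c :: nat set set \<Rightarrow> nat set \<Rightarrow> nat).
            Well_order \<tau> \<longrightarrow> (\<tau>, omega_sq) \<in> ordLess \<longrightarrow>
            (\<exists>X Y. X \<subseteq> Field w2 \<and> Y \<subseteq> Field w1 \<and>
                 (Restr w2 X, w2) \<in> ordIso \<and> (Restr w1 Y, \<tau>) \<in> ordIso \<and>
                 (\<exists>k. \<forall>x\<in>X. \<forall>y\<in>Y. c x y = k)))"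
proof -
  from assms obtain T where
    T1: "\<forall>a. limit1 a \<longrightarrow> T a \<subseteq> underS w1 a \<and> (\<forall>b\<in>underS w1 a. \<exists>c\<in>T a. (b,c) \<in> w1)"
    and T2: "\<forall>A. unbounded1 A \<longrightarrow> stationary1 {a. limit1 a \<and> T a \<subseteq> A}"
    unfolding clubsuit_def by blast
  show ?thesis
  proof (intro conjI allI impI)
    fix A :: "nat set set \<Rightarrow> nat set set" and \<tau> :: "'c rel"
    assume UA: "\<forall>\<alpha>\<in>Field w2. unbounded1 (A \<alpha>)" and tw: "Well_order \<tau>" and tl: "(\<tau>, omega_sq) \<in> ordLess"
    from core[OF T1 T2 UA tw tl subset_refl card_of_Field_ordIso[OF w2C]]
    show "\<exists>B. B \<subseteq> Field w2 \<and> (card_of B, w2) \<in> ordIso \<and> (\<tau>, Restr w1 (\<Inter>\<alpha>\<in>B. A \<alpha>)) \<in> ordLeq"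
      by blast
  next
    fix \<tau> :: "'d rel" and c :: "nat set set \<Rightarrow> nat set \<Rightarrow> nat"
    assume tw: "Well_order \<tau>" and tl: "(\<tau>, omega_sq) \<in> ordLess"
    from part2[OF T1 T2 tw tl, of c]
    show "\<exists>X Y. X \<subseteq> Field w2 \<and> Y \<subseteq> Field w1 \<and>
                 (Restr w2 X, w2) \<in> ordIso \<and> (Restr w1 Y, \<tau>) \<in> ordIso \<and>
                 (\<exists>k. \<forall>x\<in>X. \<forall>y\<in>Y. c x y = k)" .
  qed
qed



end
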